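(* Let $n,B$ be powers of $2$ with $2\le B\le n$, let $F\ge2$ be an even integer, $\epsilon=(1/4)^{F-1}$, and let $\hat G\in\mathbb{R}^n$ be a flat filter with $B$ buckets and sharpness $F$. Let $\sigma$ be uniformly random among the odd integers in $[n]$ and $b$ independently uniform in $[n]$. Then for all $f\neq f'$ in $[n]$ and all $\lambda\ge0$, \[\mathbb{E}\exp\bigl(\lambda\hat G_{o_{f,\sigma,b}(f')}\bigr)\le M(\lambda):=e^{\lambda\epsilon}\Bigl[\Bigl(\frac2B+\frac1n\Bigr)\bigl(e^{\lambda(1-\epsilon)}-1\bigr)+1\Bigr].\]
   Context: A flat filter with $B$ buckets and sharpness $F$ is a sequence $\hat G\in\mathbb{R}^n$ indexed by $\mathbb{Z}_n$ (with representatives $f\in\{-n/2,\dots,n/2-1\}$), symmetric about $0$, such that (1) $\hat G_f\in[0,1]$ for all $f$; (2) $\hat G_f\ge1-(1/4)^{F-1}$ whenever $|f|\le n/(2B)$; (3) $\hat G_f\le(1/4)^{F-1}\bigl(\frac{n}{B|f|}\bigr)^{F-1}$ whenever $|f|\ge n/B$. For $\sigma,b\in[n]$: $\pi_{\sigma,b}(f)=\sigma(f-b)\bmod n$; $h_{\sigma,b}(f)=\lfloor (B/n)\pi_{\sigma,b}(f)+1/2\rfloor$; $o_{f,\sigma,b}(f')=\pi_{\sigma,b}(f')-(n/B)h_{\sigma,b}(f)\bmod n$. *)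

theory Defs
  imports Complex_Main
begin

text \<open>Centered representative in Z_n: the unique element of
  {-n/2, ..., n/2-1} congruent to x modulo n.\<close>
definition cent :: "nat \<Rightarrow> int \<Rightarrow> int" where
  "cent n x = (x + int n div 2) mod int n - int n div 2"

text \<open>A flat filter with B buckets and sharpness F, given by its values on
  the representatives f in {-n/2, ..., n/2-1} of Z_n.\<close>
definition flat_filter :: "nat \<Rightarrow> nat \<Rightarrow> nat \<Rightarrow> (int \<Rightarrow> real) \<Rightarrow> bool" where
  "flat_filter n B F G \<longleftrightarrow>
     (\<forall>f. - (int n div 2) \<le> f \<and> f < int n div 2 \<longrightarrow>
        G (cent n (- f)) = G f \<and>
        0 \<le> G f \<and> G f \<le> 1 \<and>
        (real_of_int \<bar>f\<bar> \<le> real n / (2 * real B) \<longrightarrow> G f \<ge> 1 - (1/4) ^ (F - 1)) \<and>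
        (real_of_int \<bar>f\<bar> \<ge> real n / real B \<longrightarrow>
           G f \<le> (1/4) ^ (F - 1) * (real n / (real B * real_of_int \<bar>f\<bar>)) ^ (F - 1)))"

definition perm_pi :: "nat \<Rightarrow> int \<Rightarrow> int \<Rightarrow> int \<Rightarrow> int" where
  "perm_pi n \<sigma> b f = (\<sigma> * (f - b)) mod int n"

definition hash_h :: "nat \<Rightarrow> nat \<Rightarrow> int \<Rightarrow> int \<Rightarrow> int \<Rightarrow> int" where
  "hash_h n B \<sigma> b f = \<lfloor>real B / real n * real_of_int (perm_pi n \<sigma> b f) + 1/2\<rfloor>"

text \<open>Offset o_{f,sigma,b}(f'); n/B is an integer since n, B are powers of 2 with B <= n.\<close>
definition offset_o :: "nat \<Rightarrow> nat \<Rightarrow> int \<Rightarrow> int \<Rightarrow> int \<Rightarrow> int \<Rightarrow> int" where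
  "offset_o n B f \<sigma> b f' = (perm_pi n \<sigma> b f' - (int n div int B) * hash_h n B \<sigma> b f) mod int n"

end

theory Submission
  imports Defs
begin



lemma two_adic: fixes u :: int assumes "u \<noteq> 0" shows "\<exists>s v. u = 2^s * v \<and> odd v"
  using assms
proof (induction "nat \<bar>u\<bar>" arbitrary: u rule: less_induct)
  case less
  show ?case
  proof (cases "odd u")
    case True then show ?thesis by (rule_tac x=0 in exI) auto
  next
    case False
    then obtain w where w: "u = 2*w" by (auto elim: evenE)
    with less.prems have "w \<noteq> 0" by auto
    moreover have "nat \<bar>w\<bar> < nat \<bar>u\<bar>" using w \<open>w\<noteq>0\<close> by auto
    ultimately obtain s v where "w = 2^s*v" "odd v" using less.hyps by blast
    then show ?thesis using w by (rule_tac x="Suc s" in exI, rule_tac x=v in exI) auto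
  qed
qed

lemma cent_cong: "x mod int n = y mod int n \<Longrightarrow> cent n x = cent n y"
  unfolding cent_def by (metis mod_add_cong)

lemma cent_mod: "cent n x mod int n = x mod int n"
  unfolding cent_def by (simp add: mod_diff_left_eq)

lemma cent_range: assumes "n > 0" "even n"
  shows "- (int n div 2) \<le> cent n x \<and> cent n x < int n div 2"
proof -
  have "0 \<le> (x + int n div 2) mod int n" "(x + int n div 2) mod int n < int n" using assms by auto
  moreover have "int n = 2 * (int n div 2)" using assms by auto
  ultimately show ?thesis unfolding cent_def by linarith
qed

lemma coprime_pow2: fixes v :: int assumes "odd v" shows "coprime (2^k) v"
  using assms by (simp add: coprime_power_left_iff coprime_left_2_iff_odd)

lemma sum_perm:
  fixes \<phi> :: "int \<Rightarrow> real" and \<sigma> f :: int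
  assumes "n = 2^k" "odd \<sigma>"
  shows "(\<Sum>b\<in>{0..<int n}. \<phi> ((\<sigma>*(f-b)) mod int n)) = (\<Sum>p\<in>{0..<int n}. \<phi> p)"
proof -
  let ?h = "\<lambda>b. (\<sigma>*(f-b)) mod int n"
  have cop: "coprime (int n) \<sigma>" using assms coprime_pow2[of \<sigma> k] by simp
  have inj: "inj_on ?h {0..<int n}"
  proof (rule inj_onI)
    fix b b' assume b: "b \<in> {0..<int n}" "b' \<in> {0..<int n}" and e: "?h b = ?h b'"
    then have "int n dvd \<sigma>*(f-b) - \<sigma>*(f-b')" by (simp add: mod_eq_dvd_iff)
    then have "int n dvd \<sigma>*(b'-b)" by (simp add: algebra_simps)
    then have "int n dvd (b'-b)" using cop by (simp add: coprime_dvd_mult_right_iff)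
    then obtain q where q: "b' - b = int n * q" by blast
    have "\<bar>b'-b\<bar> < int n" using b by auto
    then have "int n * \<bar>q\<bar> < int n * 1" using q by (simp add: abs_mult)
    then have "\<bar>q\<bar> < 1" by (simp only: mult_less_cancel_left)
    then have "q = 0" by simp
    then show "b = b'" using q by simp
  qed
  have pos: "int n > 0" using assms by simp
  have sub: "?h ` {0..<int n} \<subseteq> {0..<int n}" using pos by auto
  have "?h ` {0..<int n} = {0..<int n}"
    by (rule endo_inj_surj[OF _ sub inj]) simp
  then have "bij_betw ?h {0..<int n} {0..<int n}" using inj by (simp add: bij_betw_def)
  then show ?thesis by (rule sum.reindex_bij_betw)
qed



lemma sum_blocks:
  fixes \<psi> :: "int \<Rightarrow> real"
  assumes "n = B*K" "K>0"
  shows "(\<Sum>p\<in>{0..<int n}. \<psi> p) = (\<Sum>q\<in>{0..<int B}. \<Sum>t\<in>{0..<int K}. \<psi> (int K * q + t))"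
proof -
  let ?h = "\<lambda>(q,t). int K * q + t"
  have bij: "bij_betw ?h ({0..<int B} \<times> {0..<int K}) {0..<int n}"
  proof (rule bij_betwI')
    fix x y assume "x \<in> {0..<int B} \<times> {0..<int K}" "y \<in> {0..<int B} \<times> {0..<int K}"
    then obtain q t q' t' where x: "x = (q,t)" and y: "y = (q',t')" and
      r: "0 \<le> t" "t < int K" "0 \<le> t'" "t' < int K" by auto
    show "(?h x = ?h y) = (x = y)"
    proof
      assume e: "?h x = ?h y"
      have "(int K * q + t) div int K = q" "(int K * q + t) mod int K = t"
        "(int K * q' + t') div int K = q'" "(int K * q' + t') mod int K = t'"
        using r assms by auto
      then show "x = y" using e x y by auto
    qed simp
  next
    fix x assume "x \<in> {0..<int B} \<times> {0..<int K}"
    then obtain q t where x: "x = (q,t)" "0 \<le> q" "q < int B" "0 \<le> t" "t < int K" by auto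
    then have "int K * q + t < int K * q + int K" by simp
    also have "\<dots> = int K * (q + 1)" by (simp add: algebra_simps)
    also have "\<dots> \<le> int K * int B" using x by (intro mult_left_mono) auto
    finally show "?h x \<in> {0..<int n}" using x assms by (simp add: mult.commute)
  next
    fix p assume p: "p \<in> {0..<int n}"
    show "\<exists>x\<in>{0..<int B} \<times> {0..<int K}. p = ?h x"
    proof (intro bexI)
      show "p = ?h (p div int K, p mod int K)" by simp
      have "int K * (p div int K) + p mod int K = p" by simp
      moreover have "0 \<le> p mod int K" using assms by simp
      moreover have "p < int K * int B" using p assms by (simp add: mult.commute)
      ultimately have "int K * (p div int K) < int K * int B" by linarith
      then have "p div int K < int B" using assms by (simp add: mult_less_cancel_left_pos)
      then show "(p div int K, p mod int K) \<in> {0..<int B} \<times> {0..<int K}"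
        using p assms by (auto simp: pos_imp_zdiv_nonneg_iff)
    qed
  qed
  have "(\<Sum>p\<in>{0..<int n}. \<psi> p) = (\<Sum>x\<in>{0..<int B} \<times> {0..<int K}. \<psi> (?h x))"
    using sum.reindex_bij_betw[OF bij, of \<psi>] by simp
  also have "\<dots> = (\<Sum>(q,t)\<in>{0..<int B} \<times> {0..<int K}. \<psi> (int K * q + t))"
    by (rule sum.cong) auto
  also have "\<dots> = (\<Sum>q\<in>{0..<int B}. \<Sum>t\<in>{0..<int K}. \<psi> (int K * q + t))"
    by (rule sum.cartesian_product[symmetric])
  finally show ?thesis .
qed

definition rho :: "nat \<Rightarrow> int \<Rightarrow> int" where
  "rho K t = (if 2*t < int K then t else t - int K)"

lemma hh_block:
  assumes "n = B*K" "B>0" "K>0" "0 \<le> t" "t < int K"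
  shows "int K * q + t - int K * \<lfloor>real B / real n * real_of_int (int K * q + t) + 1/2\<rfloor> = rho K t"
proof -
  have e: "real B / real n * real_of_int (int K * q + t) + 1/2 = real_of_int q + (real_of_int t / real K + 1/2)"
    using assms by (simp add: field_simps)
  have "\<lfloor>real B / real n * real_of_int (int K * q + t) + 1/2\<rfloor> = q + (if 2*t < int K then 0 else 1)"
  proof (cases "2*t < int K")
    case True
    have "real_of_int t / real K + 1/2 < 1" using True assms
      by (simp add: field_simps)
    moreover have "0 \<le> real_of_int t / real K + 1/2" using assms by simp
    ultimately show ?thesis unfolding e using True by (simp add: floor_eq_iff)
  next
    case False
    have "real_of_int t / real K + 1/2 < 2" using assms
      by (simp add: field_simps)
    moreover have "1 \<le> real_of_int t / real K + 1/2" using False assms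
      by (simp add: field_simps)
    ultimately show ?thesis unfolding e using False by (simp add: floor_eq_iff)
  qed
  then show ?thesis unfolding rho_def by (simp add: algebra_simps)
qed

lemma rho_bounds: "0 \<le> t \<Longrightarrow> t < int K \<Longrightarrow> - int K \<le> 2 * rho K t \<and> 2 * rho K t < int K"
  unfolding rho_def by auto



lemma card_ap:
  fixes lo L c d :: int assumes "c > 0" "L \<ge> 0"
  shows "card {y. lo \<le> y \<and> y \<le> lo + L \<and> y mod c = d} \<le> nat (L div c + 1)"
proof -
  let ?S = "{y. lo \<le> y \<and> y \<le> lo + L \<and> y mod c = d}"
  let ?h = "\<lambda>y. (y - lo) div c"
  have inj: "inj_on ?h ?S"
  proof (rule inj_onI)
    fix y y' assume y: "y \<in> ?S" "y' \<in> ?S" and e: "?h y = ?h y'"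
    have "(y - lo) mod c = (y mod c - lo) mod c" "(y' - lo) mod c = (y' mod c - lo) mod c"
      by (simp_all add: mod_diff_left_eq)
    then have "(y - lo) mod c = (y' - lo) mod c" using y by simp
    moreover have "y - lo = c * ?h y + (y-lo) mod c" by simp
    moreover have "y' - lo = c * ?h y' + (y'-lo) mod c" by simp
    ultimately show "y = y'" using e by simp
  qed
  have "?h ` ?S \<subseteq> {0..L div c}"
  proof
    fix z assume "z \<in> ?h ` ?S"
    then obtain y where y: "y \<in> ?S" "z = ?h y" by blast
    have "0 \<le> y - lo" "y - lo \<le> L" using y by auto
    then have "0 \<le> z" "z \<le> L div c" using y(2) assms
      by (simp_all add: pos_imp_zdiv_nonneg_iff zdiv_mono1)
    then show "z \<in> {0..L div c}" by simp
  qed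
  then have "card (?h ` ?S) \<le> card {0..L div c}" by (intro card_mono) auto
  then show ?thesis using card_image[OF inj] by simp
qed



lemma count_sigma:
  fixes n K :: nat and u r :: int
  assumes n: "n = 2^k" and K: "K = 2^i" and nK: "2*K \<le> n" and u0: "u \<noteq> 0" and un: "\<bar>u\<bar> < int n"
    and r1: "- int K \<le> 2*r" and r2: "2*r < int K"
  shows "card {\<sigma> \<in> {0..<int n}. odd \<sigma> \<and> \<bar>cent n (\<sigma>*u + r)\<bar> < int K} \<le> K"
proof -
  obtain s v where uv: "u = 2^s * v" and v: "odd v" using two_adic[OF u0] by blast
  have "v \<noteq> 0" using v by auto
  then have "(2::int)^s * 1 \<le> 2^s * \<bar>v\<bar>" by (intro mult_left_mono) auto
  then have "(2::int)^s \<le> \<bar>u\<bar>" using uv by (simp add: abs_mult)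
  moreover have "int n = 2^k" using n by simp
  ultimately have "(2::int)^s < 2^k" using un by linarith
  then have sk: "s < k" using power_strict_increasing_iff[of "2::int" s k] by simp
  define g :: int where "g = 2^s"
  define M :: int where "M = 2^(k-s)"
  have gpos: "g > 0" and Mpos: "M > 0" unfolding g_def M_def by auto
  have nM: "int n = g * M" unfolding g_def M_def n using sk
    by (simp add: power_add[symmetric])
  have Mev: "M = 2 * 2^(k-s-1)"
  proof -
    have "k - s = Suc (k-s-1)" using sk by simp
    then show ?thesis unfolding M_def by (metis power_Suc)
  qed
  have g2n: "2*g dvd int n" unfolding nM using Mev by (simp add: mult_dvd_mono)
  define Y where "Y \<sigma> = cent n (\<sigma>*u + r) - r" for \<sigma>
  define lo where "lo = - int K + 1 - r"
  define L where "L = 2 * int K - 2"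
  define A where "A = {\<sigma> \<in> {0..<int n}. odd \<sigma> \<and> \<bar>cent n (\<sigma>*u + r)\<bar> < int K}"
  define Ys where "Ys = {y. lo \<le> y \<and> y \<le> lo + L \<and> y mod (2*g) = g}"
  have Ymodn: "Y \<sigma> mod int n = (\<sigma>*u) mod int n" for \<sigma>
  proof -
    have "cent n (\<sigma>*u + r) mod int n = (\<sigma>*u + r) mod int n" by (rule cent_mod)
    then have "(cent n (\<sigma>*u + r) - r) mod int n = (\<sigma>*u + r - r) mod int n"
      by (rule mod_diff_cong) simp
    then show ?thesis unfolding Y_def by simp
  qed
  have Ymod: "Y \<sigma> mod (2*g) = g" if "odd \<sigma>" for \<sigma>
  proof -
    have "Y \<sigma> mod (2*g) = (Y \<sigma> mod int n) mod (2*g)" using g2n by (simp add: mod_mod_cancel)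
    also have "\<dots> = (\<sigma>*u) mod (2*g)" using g2n Ymodn by (simp add: mod_mod_cancel)
    also have "\<sigma>*u = g * (\<sigma>*v)" unfolding uv g_def by simp
    also have "(g * (\<sigma>*v)) mod (2*g) = g * ((\<sigma>*v) mod 2)"
      by (metis mult.commute mult_mod_right)
    also have "(\<sigma>*v) mod 2 = 1"
    proof -
      have "odd (\<sigma>*v)" using that v by simp
      then show ?thesis using odd_iff_mod_2_eq_one by blast
    qed
    finally show ?thesis by simp
  qed
  have inj: "inj_on (\<lambda>\<sigma>. (Y \<sigma>, \<sigma> div M)) A"
  proof (rule inj_onI)
    fix a b assume a: "a \<in> A" and b: "b \<in> A" and e: "(Y a, a div M) = (Y b, b div M)"
    then have "Y a = Y b" by simp
    then have "(a*u) mod int n = (b*u) mod int n" using Ymodn[of a] Ymodn[of b] by simp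
    then have "int n dvd a*u - b*u" by (simp add: mod_eq_dvd_iff)
    moreover have "a*u - b*u = g * ((a-b)*v)" unfolding uv g_def by (simp add: algebra_simps)
    ultimately have "g * M dvd g * ((a-b)*v)" using nM by simp
    then have "M dvd (a-b)*v" using gpos by simp
    moreover have "coprime M v" unfolding M_def using v by (rule coprime_pow2)
    ultimately have "M dvd a - b" by (simp add: coprime_dvd_mult_left_iff)
    then have "a mod M = b mod M" by (simp add: mod_eq_dvd_iff)
    moreover have "a = M * (a div M) + a mod M" "b = M * (b div M) + b mod M" by simp_all
    ultimately show "a = b" using e by simp
  qed
  have img: "(\<lambda>\<sigma>. (Y \<sigma>, \<sigma> div M)) ` A \<subseteq> Ys \<times> {0..<g}"
  proof
    fix z assume "z \<in> (\<lambda>\<sigma>. (Y \<sigma>, \<sigma> div M)) ` A"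
    then obtain a where a: "a \<in> A" and z: "z = (Y a, a div M)" by blast
    have a1: "0 \<le> a" "a < g * M" "odd a" "\<bar>cent n (a*u + r)\<bar> < int K" using a nM unfolding A_def by auto
    have "Y a \<in> Ys" unfolding Ys_def lo_def L_def Y_def using a1(4) Ymod[OF a1(3)]
      unfolding Y_def by auto
    moreover have "0 \<le> a div M" using a1 Mpos by (simp add: pos_imp_zdiv_nonneg_iff)
    moreover have "a div M < g"
    proof -
      have "M * (a div M) + a mod M = a" by simp
      moreover have "0 \<le> a mod M" using Mpos by simp
      moreover have "a < M * g" using a1 by (simp add: mult.commute)
      ultimately have "M * (a div M) < M * g" by linarith
      then show ?thesis using Mpos by (simp add: mult_less_cancel_left_pos)
    qed
    ultimately show "z \<in> Ys \<times> {0..<g}" using z by simp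
  qed
  have finYs: "finite Ys" by (rule finite_subset[of _ "{lo..lo+L}"]) (auto simp: Ys_def)
  have "card A \<le> card (Ys \<times> {0..<g})"
    using card_inj_on_le[OF inj img] finYs by simp
  also have "\<dots> = card Ys * nat g" by (simp add: card_cartesian_product)
  finally have cA: "card A \<le> card Ys * nat g" .
  have Kpos: "int K > 0" using K by simp
  have cYs: "card Ys \<le> nat (L div (2*g) + 1)" unfolding Ys_def
    by (rule card_ap) (use gpos Kpos L_def in auto)
  have "card Ys * nat g \<le> K"
  proof (cases "s < i")
    case True
    define m :: int where "m = 2^(i-s)"
    have Kgm: "int K = g * m" unfolding K g_def m_def using True by (simp add: power_add[symmetric])
    have "L < (2*g) * m" unfolding L_def Kgm by simp
    moreover have "(2*g) * (L div (2*g)) \<le> L"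
    proof -
      have "(2*g) * (L div (2*g)) + L mod (2*g) = L" by simp
      moreover have "0 \<le> L mod (2*g)" using gpos by simp
      ultimately show ?thesis by linarith
    qed
    ultimately have "(2*g) * (L div (2*g)) < (2*g) * m" by linarith
    then have "L div (2*g) < m" using gpos by (simp add: mult_less_cancel_left_pos)
    then have "card Ys \<le> nat m" using cYs by simp
    then have "card Ys * nat g \<le> nat m * nat g" by simp
    also have "\<dots> = K" using Kgm gpos by (simp add: nat_mult_distrib[symmetric] mult.commute)
    finally show ?thesis .
  next
    case False
    show ?thesis
    proof (cases "s = i")
      case True
      have gK: "g = int K" unfolding g_def K True by simp
      have "L div (2*g) = 0" using gK Kpos unfolding L_def by (intro div_pos_pos_trivial) auto
      then have "card Ys \<le> 1" using cYs by simp
      then have "card Ys * nat g \<le> 1 * nat g" by (intro mult_right_mono) auto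
      then show ?thesis using gK by simp
    next
      case False2: False
      then have "i < s" using False by simp
      then have "2 * int K \<le> g"
      proof -
        have "(2::int)^Suc i \<le> 2^s" by (rule power_increasing) (use \<open>i<s\<close> in auto)
        then show ?thesis unfolding g_def K by simp
      qed
      have "Ys = {}"
      proof (rule ccontr)
        assume "Ys \<noteq> {}"
        then obtain y where y: "y \<in> Ys" by blast
        then have "- g < y" "y < g" using \<open>2 * int K \<le> g\<close> r1 r2 unfolding Ys_def lo_def L_def by auto
        moreover have "y = 2*g * (y div (2*g)) + g"
        proof -
          have "y mod (2*g) = g" using y by (simp add: Ys_def)
          moreover have "2*g*(y div (2*g)) + y mod (2*g) = y" by simp
          ultimately show ?thesis by simp
        qed
        ultimately show False
        proof (cases "y div (2*g) \<ge> 0")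
          case True
          then have "0 \<le> 2*g * (y div (2*g))" using gpos by simp
          then show False using \<open>y < g\<close> \<open>y = 2*g * (y div (2*g)) + g\<close> by linarith
        next
          case False
          then have "2*g * (y div (2*g)) \<le> 2*g * (-1)" using gpos by (intro mult_left_mono) auto
          then show False using \<open>- g < y\<close> \<open>y = 2*g * (y div (2*g)) + g\<close> by linarith
        qed
      qed
      then show ?thesis by simp
    qed
  qed
  with cA show ?thesis unfolding A_def by simp
qed



lemma pointwise:
  fixes G :: "int \<Rightarrow> real"
  assumes ff: "flat_filter n B F G" and n0: "n > 0" "even n" and nBK: "n = B*K" and B0: "B > 0"
    and lam: "lam \<ge> 0"
  shows "exp (lam * G (cent n x)) \<le> exp (lam * (1/4)^(F-1)) +
     exp (lam * (1/4)^(F-1)) * (exp (lam*(1-(1/4)^(F-1))) - 1) * (if \<bar>cent n x\<bar> < int K then 1 else 0)"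
proof -
  define c where "c = cent n x"
  define \<epsilon> :: real where "\<epsilon> = (1/4)^(F-1)"
  have eps: "0 < \<epsilon>" "\<epsilon> \<le> 1" unfolding \<epsilon>_def by (auto intro: power_le_one)
  have cr: "- (int n div 2) \<le> c \<and> c < int n div 2" unfolding c_def by (rule cent_range[OF n0])
  have G: "0 \<le> G c" "G c \<le> 1"
    "real_of_int \<bar>c\<bar> \<ge> real n / real B \<Longrightarrow> G c \<le> \<epsilon> * (real n / (real B * real_of_int \<bar>c\<bar>)) ^ (F - 1)"
    using ff cr unfolding flat_filter_def \<epsilon>_def by blast+
  have K0: "K > 0" using n0 nBK by simp
  show ?thesis
  proof (cases "\<bar>c\<bar> < int K")
    case True
    have "exp (lam * G c) \<le> exp lam" using G lam by (simp add: mult_left_le)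
    also have "exp lam = exp (lam*\<epsilon>) * exp (lam*(1-\<epsilon>))" by (simp add: exp_add[symmetric] algebra_simps)
    also have "\<dots> = exp (lam*\<epsilon>) + exp (lam*\<epsilon>) * (exp (lam*(1-\<epsilon>)) - 1) * 1" by (simp add: algebra_simps)
    finally show ?thesis using True unfolding c_def \<epsilon>_def by simp
  next
    case False
    have nb: "real n / real B = real K" using nBK B0 by simp
    have ck: "real K \<le> real_of_int \<bar>c\<bar>" using False by linarith
    have q: "real n / (real B * real_of_int \<bar>c\<bar>) = real K / real_of_int \<bar>c\<bar>" using nBK B0 by simp
    have "real K / real_of_int \<bar>c\<bar> \<le> 1" using ck K0 by (simp add: divide_le_eq_1)
    moreover have "0 \<le> real K / real_of_int \<bar>c\<bar>" by simp
    ultimately have p1: "(real K / real_of_int \<bar>c\<bar>)^(F-1) \<le> 1" by (rule power_le_one[rotated])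
    have "G c \<le> \<epsilon> * (real K / real_of_int \<bar>c\<bar>)^(F-1)" using G(3) ck nb q by simp
    also have "\<dots> \<le> \<epsilon>" using p1 eps by (simp add: mult_left_le)
    finally have "G c \<le> \<epsilon>" .
    then have "exp (lam * G c) \<le> exp (lam * \<epsilon>)" using lam by (simp add: mult_left_mono)
    then show ?thesis using False unfolding c_def \<epsilon>_def by simp
  qed
qed

lemma card_odd: assumes "even n" shows "real (card {s \<in> {0..<int n}. odd s}) = real n / 2"
proof -
  have eq: "{s \<in> {0..<int n}. odd s} = (\<lambda>i. 2*i+1) ` {0..<int n div 2}"
  proof
    show "{s \<in> {0..<int n}. odd s} \<subseteq> (\<lambda>i. 2*i+1) ` {0..<int n div 2}"
    proof
      fix s assume s: "s \<in> {s \<in> {0..<int n}. odd s}"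
      then obtain i where i: "s = 2*i+1" by (auto elim: oddE)
      then have "i \<in> {0..<int n div 2}" using s assms by auto
      then show "s \<in> (\<lambda>i. 2*i+1) ` {0..<int n div 2}" using i by blast
    qed
  next
    show "(\<lambda>i. 2*i+1) ` {0..<int n div 2} \<subseteq> {s \<in> {0..<int n}. odd s}" using assms by auto
  qed
  have "inj_on (\<lambda>i::int. 2*i+1) {0..<int n div 2}" by (rule inj_onI) simp
  then have "card {s \<in> {0..<int n}. odd s} = nat (int n div 2)" unfolding eq by (simp add: card_image)
  then show ?thesis using assms by auto
qed



theorem lemma5p6:
  fixes n B F :: nat and G :: "int \<Rightarrow> real" and f f' :: int and lam :: real
  assumes "\<exists>k. n = 2 ^ k" and "\<exists>j. B = 2 ^ j" and "2 \<le> B" and "B \<le> n"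
    and "F \<ge> 2" and "even F"
    and "flat_filter n B F G"
    and "f \<in> {0..<int n}" and "f' \<in> {0..<int n}" and "f \<noteq> f'"
    and "lam \<ge> 0"
  shows "(\<Sum>\<sigma>\<in>{s \<in> {0..<int n}. odd s}. \<Sum>b\<in>{0..<int n}.
            exp (lam * G (cent n (offset_o n B f \<sigma> b f'))))
          / (real (card {s \<in> {0..<int n}. odd s}) * real n)
         \<le> exp (lam * (1/4) ^ (F - 1)) *
            ((2 / real B + 1 / real n) * (exp (lam * (1 - (1/4) ^ (F - 1))) - 1) + 1)"
proof -
  obtain k where n: "n = 2^k" using assms(1) by blast
  obtain j where B: "B = 2^j" using assms(2) by blast
  have jk: "j \<le> k" using assms(4) unfolding n B by (simp add: power_increasing_iff)
  define K :: nat where "K = 2^(k-j)"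
  have nBK: "n = B*K" unfolding n B K_def using jk by (simp add: power_add[symmetric])
  have B0: "B > 0" and n0: "n > 0" and K0: "K > 0" using nBK B by (auto simp: K_def)
  have j0: "j > 0" using assms(3) B by (cases j) auto
  have nev: "even n" unfolding n using j0 jk by simp
  have KK: "2*K \<le> n" using nBK assms(3) by simp
  have divK: "int n div int B = int K" using nBK B0 by simp
  define \<epsilon> :: real where "\<epsilon> = (1/4)^(F-1)"
  define E where "E = exp (lam * \<epsilon>)"
  define D where "D = exp (lam*(1-\<epsilon>)) - 1"
  have eps: "\<epsilon> \<le> 1" unfolding \<epsilon>_def by (auto intro: power_le_one)
  have E0: "E > 0" unfolding E_def by simp
  have D0: "D \<ge> 0" unfolding D_def using eps assms(11) by simp
  define S where "S = {s \<in> {0..<int n}. odd s}"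
  define ind where "ind x = (if \<bar>cent n x\<bar> < int K then 1 else 0 :: real)" for x
  define u where "u = f' - f"
  have u0: "u \<noteq> 0" and un: "\<bar>u\<bar> < int n" using assms(8-10) unfolding u_def by auto
  define hh where "hh p = \<lfloor>real B / real n * real_of_int p + 1/2\<rfloor>" for p
  define N where "N = (\<Sum>\<sigma>\<in>S. \<Sum>b\<in>{0..<int n}. ind (offset_o n B f \<sigma> b f'))"
  have finS: "finite S" unfolding S_def by (rule finite_subset[of _ "{0..<int n}"]) auto
  have step1: "(\<Sum>\<sigma>\<in>S. \<Sum>b\<in>{0..<int n}. exp (lam * G (cent n (offset_o n B f \<sigma> b f'))))
     \<le> (\<Sum>\<sigma>\<in>S. \<Sum>b\<in>{0..<int n}. E + E * D * ind (offset_o n B f \<sigma> b f'))"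
    by (intro sum_mono) (use pointwise[OF assms(7) n0 nev nBK B0 assms(11)] in
        \<open>simp add: E_def D_def \<epsilon>_def ind_def\<close>)
  also have "\<dots> = real (card S) * real n * E + E * D * N"
    by (simp add: N_def sum.distrib sum_distrib_left algebra_simps)
  finally have s1: "(\<Sum>\<sigma>\<in>S. \<Sum>b\<in>{0..<int n}. exp (lam * G (cent n (offset_o n B f \<sigma> b f'))))
     \<le> real (card S) * real n * E + E * D * N" .
  have inner: "(\<Sum>b\<in>{0..<int n}. ind (offset_o n B f \<sigma> b f')) =
      real B * (\<Sum>t\<in>{0..<int K}. ind (\<sigma>*u + rho K t))" if \<sigma>: "\<sigma> \<in> S" for \<sigma>
  proof -
    define \<phi> where "\<phi> p = ind (\<sigma>*u + p - int K * hh p)" for p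
    have "ind (offset_o n B f \<sigma> b f') = \<phi> ((\<sigma>*(f-b)) mod int n)" for b
    proof -
      let ?p = "(\<sigma>*(f-b)) mod int n"
      have "offset_o n B f \<sigma> b f' mod int n = (\<sigma>*u + ?p - int K * hh ?p) mod int n"
      proof -
        have "offset_o n B f \<sigma> b f' = ((\<sigma>*(f'-b)) mod int n - int K * hh ?p) mod int n"
          unfolding offset_o_def perm_pi_def hash_h_def hh_def divK by simp
        also have "\<dots> = (\<sigma>*(f'-b) - int K * hh ?p) mod int n" by (simp add: mod_diff_left_eq)
        also have "\<sigma>*(f'-b) = \<sigma>*u + \<sigma>*(f-b)" unfolding u_def by (simp add: algebra_simps)
        also have "(\<sigma>*u + \<sigma>*(f-b) - int K * hh ?p) mod int n = (\<sigma>*u + ?p - int K * hh ?p) mod int n"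
          by (metis mod_add_right_eq mod_diff_left_eq)
        finally show ?thesis by simp
      qed
      then show ?thesis unfolding \<phi>_def ind_def using cent_cong by metis
    qed
    then have "(\<Sum>b\<in>{0..<int n}. ind (offset_o n B f \<sigma> b f')) = (\<Sum>b\<in>{0..<int n}. \<phi> ((\<sigma>*(f-b)) mod int n))"
      by simp
    also have "\<dots> = (\<Sum>p\<in>{0..<int n}. \<phi> p)" using \<sigma> unfolding S_def by (intro sum_perm[OF n]) auto
    also have "\<dots> = (\<Sum>q\<in>{0..<int B}. \<Sum>t\<in>{0..<int K}. \<phi> (int K * q + t))" by (rule sum_blocks[OF nBK K0])
    also have "\<dots> = (\<Sum>q\<in>{0..<int B}. \<Sum>t\<in>{0..<int K}. ind (\<sigma>*u + rho K t))"
    proof (intro sum.cong refl)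
      fix q t assume "q \<in> {0..<int B}" "t \<in> {0..<int K}"
      then have "int K * q + t - int K * hh (int K * q + t) = rho K t"
        unfolding hh_def by (intro hh_block[OF nBK B0 K0]) auto
      then have eq: "\<sigma>*u + (int K * q + t) - int K * hh (int K * q + t) = \<sigma>*u + rho K t" by linarith
      show "\<phi> (int K * q + t) = ind (\<sigma>*u + rho K t)" unfolding \<phi>_def
        by (simp only: eq)
    qed
    also have "\<dots> = real B * (\<Sum>t\<in>{0..<int K}. ind (\<sigma>*u + rho K t))" by simp
    finally show ?thesis .
  qed
  have cnt: "(\<Sum>\<sigma>\<in>S. ind (\<sigma>*u + rho K t)) \<le> real K" if t: "t \<in> {0..<int K}" for t
  proof -
    have "(\<Sum>\<sigma>\<in>S. ind (\<sigma>*u + rho K t)) = real (card {\<sigma> \<in> S. \<bar>cent n (\<sigma>*u + rho K t)\<bar> < int K})"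
      unfolding ind_def using finS by (simp add: sum.If_cases Int_def conj_commute)
    also have "{\<sigma> \<in> S. \<bar>cent n (\<sigma>*u + rho K t)\<bar> < int K} =
        {\<sigma> \<in> {0..<int n}. odd \<sigma> \<and> \<bar>cent n (\<sigma>*u + rho K t)\<bar> < int K}" unfolding S_def by auto
    also have "card \<dots> \<le> K"
      using rho_bounds[of t K] t by (intro count_sigma[OF n _ KK u0 un, of "k-j"]) (auto simp: K_def)
    finally show ?thesis by simp
  qed
  have "N = (\<Sum>\<sigma>\<in>S. real B * (\<Sum>t\<in>{0..<int K}. ind (\<sigma>*u + rho K t)))"
    unfolding N_def using inner by simp
  also have "\<dots> = real B * (\<Sum>t\<in>{0..<int K}. \<Sum>\<sigma>\<in>S. ind (\<sigma>*u + rho K t))"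
    by (simp add: sum_distrib_left sum.swap[of _ S])
  also have "\<dots> \<le> real B * (\<Sum>t\<in>{0..<int K}. real K)"
    using B0 by (intro mult_left_mono sum_mono cnt) auto
  also have "\<dots> = real B * real K * real K" by simp
  finally have NB: "N \<le> real B * real K * real K" .
  have cS: "real (card S) = real n / 2" unfolding S_def by (rule card_odd[OF nev])
  have npos: "real n > 0" using n0 by simp
  have den: "real (card S) * real n > 0" using cS npos by simp
  have "real (card S) * real n * E + E * D * N \<le>
      E * ((2 / real B + 1 / real n) * D + 1) * (real (card S) * real n)"
  proof -
    have "E * D * N \<le> E * D * (real B * real K * real K)" using NB E0 D0 by (intro mult_left_mono) auto
    also have "real B * real K * real K = real n * real n / real B" using nBK B0 by (simp add: field_simps)
    also have "E * D * (real n * real n / real B) \<le> E * D * (real n * real n / real B + real n / 2)"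
      using E0 D0 npos by (intro mult_left_mono) auto
    finally have h: "E * D * N \<le> E * D * (real n * real n / real B + real n / 2)" .
    have "E * ((2 / real B + 1 / real n) * D + 1) * (real (card S) * real n)
        = E * D * (real n * real n / real B + real n / 2) + real (card S) * real n * E"
      unfolding cS using npos B0 by (simp add: field_simps)
    then show ?thesis using h by linarith
  qed
  with s1 have "(\<Sum>\<sigma>\<in>S. \<Sum>b\<in>{0..<int n}. exp (lam * G (cent n (offset_o n B f \<sigma> b f'))))
      \<le> E * ((2 / real B + 1 / real n) * D + 1) * (real (card S) * real n)" by linarith
  then have "(\<Sum>\<sigma>\<in>S. \<Sum>b\<in>{0..<int n}. exp (lam * G (cent n (offset_o n B f \<sigma> b f'))))
      / (real (card S) * real n) \<le> E * ((2 / real B + 1 / real n) * D + 1)"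
    using den by (simp add: pos_divide_le_eq)
  then show ?thesis unfolding S_def E_def D_def \<epsilon>_def by simp
qed

end
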